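(* Let $k,\lambda,\varepsilon>0$. For each $n\ge2$ let weights $\alpha_{1,n},\dots,\alpha_{n,n}>0$ with $\sum_{i=1}^n\alpha_{i,n}=1$ be given, and let $\alpha_{\min,n}$, $\alpha_{\max,n}$ be the smallest and largest of them. Let $P_n$ be the probability on $[0,\infty)^n$ with density $\lambda^n e^{-\lambda\|x\|_1}$ (i.e. the $x_i$ are independent exponential with parameter $\lambda$), where $\|x\|_1=\sum_i x_i$. Then there exists $N=N(k,\varepsilon)$ such that for every $n\ge N$, $$P_n\left\{\big[1-(1+\varepsilon)e^{-\gamma}\big]\alpha_{\min,n}\|x\|_1<\sum_{i=1}^n\alpha_{i,n}x_i-\prod_{i=1}^n x_i^{\alpha_{i,n}}<\big[1-(1-\varepsilon)e^{-\gamma}\big]\alpha_{\max,n}\|x\|_1\right\}\ge1-\frac1{n^k}.$$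
   Context: $\gamma$ denotes Euler's constant. *)

theory Defs
  imports "HOL-Probability.Probability"
begin

definition exp_prod_measure :: "real \<Rightarrow> nat \<Rightarrow> (nat \<Rightarrow> real) measure" where
  "exp_prod_measure l n = PiM {1..n} (\<lambda>_. density lborel (exponential_density l))"

end

theory Submission
  imports Defs "HOL-Real_Asymp.Real_Asymp"
begin



definition fw :: "nat set \<Rightarrow> (nat \<Rightarrow> real) \<Rightarrow> (nat \<Rightarrow> real) \<Rightarrow> real" where
  "fw I x w = (\<Sum>i\<in>I. w i * x i) - exp (\<Sum>i\<in>I. w i * ln (x i))"

lemma fw_amgm:
  assumes "finite I" "I \<noteq> {}" "\<And>i. i\<in>I \<Longrightarrow> x i > 0" "\<And>i. i\<in>I \<Longrightarrow> w i \<ge> 0" "(\<Sum>i\<in>I. w i) = 1"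
  shows "fw I x w \<ge> 0"
proof -
  have "exp (\<Sum>i\<in>I. w i *\<^sub>R ln (x i)) \<le> (\<Sum>i\<in>I. w i * exp (ln (x i)))"
    by (rule convex_on_sum[OF assms(1,2) exp_convex assms(5)]) (use assms in auto)
  also have "\<dots> = (\<Sum>i\<in>I. w i * x i)" using assms(3) by (intro sum.cong) auto
  finally show ?thesis by (simp add: fw_def)
qed

lemma fw_mix:
  assumes "\<And>i. i\<in>I \<Longrightarrow> w i = t * u i + (1 - t) * v i" "0 \<le> t" "t \<le> 1"
  shows "fw I x w \<ge> t * fw I x u + (1 - t) * fw I x v"
proof -
  have s1: "(\<Sum>i\<in>I. w i * x i) = t * (\<Sum>i\<in>I. u i * x i) + (1-t) * (\<Sum>i\<in>I. v i * x i)"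
  proof -
    have "(\<Sum>i\<in>I. w i * x i) = (\<Sum>i\<in>I. t * (u i * x i) + (1-t) * (v i * x i))"
      by (intro sum.cong refl, subst assms(1)) (simp_all add: algebra_simps)
    then show ?thesis by (simp add: sum.distrib sum_distrib_left)
  qed
  have s2: "(\<Sum>i\<in>I. w i * ln (x i)) = t * (\<Sum>i\<in>I. u i * ln (x i)) + (1-t) * (\<Sum>i\<in>I. v i * ln (x i))"
  proof -
    have "(\<Sum>i\<in>I. w i * ln (x i)) = (\<Sum>i\<in>I. t * (u i * ln (x i)) + (1-t) * (v i * ln (x i)))"
      by (intro sum.cong refl, subst assms(1)) (simp_all add: algebra_simps)
    then show ?thesis by (simp add: sum.distrib sum_distrib_left)
  qed
  have "exp ((1 - (1-t)) *\<^sub>R (\<Sum>i\<in>I. u i * ln (x i)) + (1-t) *\<^sub>R (\<Sum>i\<in>I. v i * ln (x i)))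
     \<le> (1 - (1-t)) * exp (\<Sum>i\<in>I. u i * ln (x i)) + (1-t) * exp (\<Sum>i\<in>I. v i * ln (x i))"
    by (rule convex_onD[OF exp_convex]) (use assms in auto)
  then show ?thesis unfolding fw_def s1 s2 by (simp add: algebra_simps)
qed

lemma fw_unif:
  assumes "finite I" "card I = n" "n > 0"
  shows "fw I x (\<lambda>_. 1 / real n) = (\<Sum>i\<in>I. x i) / n - exp ((\<Sum>i\<in>I. ln (x i)) / n)"
  unfolding fw_def by (simp add: sum_divide_distrib)

lemma det_main:
  fixes I :: "nat set" and x \<alpha> :: "nat \<Rightarrow> real" and c C :: real
  assumes fin: "finite I" and cardI: "card I = n" and npos: "n > 0"
    and xpos: "\<And>i. i\<in>I \<Longrightarrow> x i > 0" and apos: "\<And>i. i\<in>I \<Longrightarrow> \<alpha> i > 0"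
    and asum: "(\<Sum>i\<in>I. \<alpha> i) = 1"
    and lo: "c * (\<Sum>i\<in>I. x i) / n < fw I x (\<lambda>_. 1 / real n)"
    and hi: "fw I x (\<lambda>_. 1 / real n) < C * (\<Sum>i\<in>I. x i) / n"
  shows "c * Min (\<alpha> ` I) * (\<Sum>i\<in>I. x i) < fw I x \<alpha> \<and> fw I x \<alpha> < C * Max (\<alpha> ` I) * (\<Sum>i\<in>I. x i)"
proof -
  define u where "u = (\<lambda>_::nat. 1 / real n)"
  define m where "m = Min (\<alpha> ` I)"
  define M where "M = Max (\<alpha> ` I)"
  define S where "S = (\<Sum>i\<in>I. x i)"
  have Ine: "I \<noteq> {}" using cardI npos by auto
  have mle: "m \<le> \<alpha> i" if "i \<in> I" for i using that fin by (simp add: m_def)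
  have Mge: "\<alpha> i \<le> M" if "i \<in> I" for i using that fin by (simp add: M_def)
  have min_in: "m \<in> \<alpha> ` I" using fin Ine unfolding m_def by (intro Min_in) auto
  have max_in: "M \<in> \<alpha> ` I" using fin Ine unfolding M_def by (intro Max_in) auto
  have mpos: "m > 0" using min_in apos by auto
  have Mpos: "M > 0" using max_in apos by auto
  have sum_m: "(\<Sum>i\<in>I. \<alpha> i - m) = 1 - n * m" using asum cardI by (simp add: sum_subtractf)
  have sum_M: "(\<Sum>i\<in>I. M - \<alpha> i) = n * M - 1" using asum cardI by (simp add: sum_subtractf)
  have nm: "n * m \<le> 1" using sum_m sum_nonneg[of I "\<lambda>i. \<alpha> i - m"] mle by force
  have nM: "n * M \<ge> 1" using sum_M sum_nonneg[of I "\<lambda>i. M - \<alpha> i"] Mge by force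
  have lo': "c * S / n < fw I x u" and hi': "fw I x u < C * S / n"
    using lo hi by (simp_all add: u_def S_def)
  have part1: "c * m * S < fw I x \<alpha>"
  proof (cases "n * m = 1")
    case True
    then have "(\<Sum>i\<in>I. \<alpha> i - m) = 0" using sum_m by simp
    then have "\<forall>i\<in>I. \<alpha> i - m = 0" using fin mle by (subst (asm) sum_nonneg_eq_0_iff) auto
    then have "fw I x \<alpha> = fw I x u" unfolding fw_def u_def using True npos
      by (intro arg_cong2[where f="(-)"] arg_cong[where f=exp] sum.cong refl)
         (auto simp: field_simps)
    moreover have "m = 1 / n" using True npos by (simp add: field_simps)
    ultimately show ?thesis using lo' by simp
  next
    case False
    define a where "a = n * m"
    have a1: "a < 1" using False nm by (simp add: a_def)
    have a0: "a > 0" using npos mpos by (simp add: a_def)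
    define v where "v = (\<lambda>i. (\<alpha> i - m) / (1 - a))"
    have "fw I x \<alpha> \<ge> a * fw I x u + (1 - a) * fw I x v"
    proof (rule fw_mix)
      fix i assume "i \<in> I"
      show "\<alpha> i = a * u i + (1 - a) * v i"
        using a1 npos by (simp add: u_def v_def a_def field_simps)
    qed (use a0 a1 in auto)
    moreover have "fw I x v \<ge> 0"
    proof (rule fw_amgm[OF fin Ine xpos])
      show "0 \<le> v i" if "i \<in> I" for i using mle[OF that] a1 by (simp add: v_def)
      show "(\<Sum>i\<in>I. v i) = 1" using a1 sum_m
        by (simp add: v_def sum_divide_distrib[symmetric] a_def)
    qed auto
    moreover have "a * (c * S / n) < a * fw I x u" using lo' a0 by (intro mult_strict_left_mono) auto
    moreover have "a * (c * S / n) = c * m * S" using npos by (simp add: a_def)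
    ultimately show ?thesis using a1 by (smt (verit) mult_nonneg_nonneg)
  qed
  have part2: "fw I x \<alpha> < C * M * S"
  proof (cases "n * M = 1")
    case True
    then have "(\<Sum>i\<in>I. M - \<alpha> i) = 0" using sum_M by simp
    then have "\<forall>i\<in>I. M - \<alpha> i = 0" using fin Mge by (subst (asm) sum_nonneg_eq_0_iff) auto
    then have "fw I x \<alpha> = fw I x u" unfolding fw_def u_def using True npos
      by (intro arg_cong2[where f="(-)"] arg_cong[where f=exp] sum.cong refl)
         (auto simp: field_simps)
    moreover have "M = 1 / n" using True npos by (simp add: field_simps)
    ultimately show ?thesis using hi' by simp
  next
    case False
    define b where "b = n * M"
    have b1: "b > 1" using False nM by (simp add: b_def)
    define v where "v = (\<lambda>i. (M - \<alpha> i) / (b - 1))"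
    have "fw I x u \<ge> (1/b) * fw I x \<alpha> + (1 - 1/b) * fw I x v"
    proof (rule fw_mix)
      fix i assume "i \<in> I"
      show "u i = (1/b) * \<alpha> i + (1 - 1/b) * v i"
        using b1 npos Mpos by (simp add: u_def v_def b_def field_simps)
    qed (use b1 in auto)
    moreover have "fw I x v \<ge> 0"
    proof (rule fw_amgm[OF fin Ine xpos])
      show "0 \<le> v i" if "i \<in> I" for i using Mge[OF that] b1 by (simp add: v_def)
      show "(\<Sum>i\<in>I. v i) = 1" using b1 sum_M
        by (simp add: v_def sum_divide_distrib[symmetric] b_def)
    qed auto
    ultimately have "(1/b) * fw I x \<alpha> \<le> fw I x u" using b1
      by (smt (verit) divide_le_eq_1 mult_nonneg_nonneg)
    then have "fw I x \<alpha> \<le> b * fw I x u" using b1 by (simp add: field_simps)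
    also have "\<dots> < b * (C * S / n)" using hi' b1 by (intro mult_strict_left_mono) auto
    also have "\<dots> = C * M * S" using npos by (simp add: b_def)
    finally show ?thesis .
  qed
  show ?thesis using part1 part2 by (simp add: m_def M_def S_def)
qed



lemma gamma_nn:
  fixes b s :: real
  assumes b: "b > 0" and s: "s > -1"
  shows "(\<integral>\<^sup>+x. ennreal (indicator {0..} x * x powr s * exp (-(b*x))) \<partial>lborel)
         = ennreal (Gamma (s+1) / b powr (s+1))"
proof -
  define f where "f = (\<lambda>t::real. ennreal (indicator {0..} t * t powr (s+1 - 1) / exp t))"
  have fm: "f \<in> borel_measurable borel" unfolding f_def by measurable
  have "ennreal (Gamma (s+1)) = (\<integral>\<^sup>+t. f t \<partial>lborel)"
    unfolding f_def using s by (intro Gamma_conv_nn_integral_real) simp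
  also have "\<dots> = ennreal \<bar>b\<bar> * (\<integral>\<^sup>+x. f (0 + b * x) \<partial>lborel)"
    by (rule nn_integral_real_affine[OF fm]) (use b in simp)
  also have "(\<lambda>x. f (0 + b * x)) = (\<lambda>x. ennreal (b powr s) * ennreal (indicator {0..} x * x powr s * exp (-(b*x))))"
  proof
    fix x
    show "f (0 + b * x) = ennreal (b powr s) * ennreal (indicator {0..} x * x powr s * exp (-(b*x)))"
    proof (cases "x \<ge> 0")
      case True
      then show ?thesis using b
        by (simp add: f_def powr_mult exp_minus field_simps ennreal_mult'[symmetric] indicator_def)
    next
      case False
      then show ?thesis using b
        by (simp add: f_def indicator_def zero_le_mult_iff)
    qed
  qed
  also have "(\<integral>\<^sup>+x. ennreal (b powr s) * ennreal (indicator {0..} x * x powr s * exp (-(b*x))) \<partial>lborel)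
     = ennreal (b powr s) * (\<integral>\<^sup>+x. ennreal (indicator {0..} x * x powr s * exp (-(b*x))) \<partial>lborel)"
    by (rule nn_integral_cmult) measurable
  finally have eq: "ennreal (Gamma (s+1)) = ennreal (b * b powr s) * (\<integral>\<^sup>+x. ennreal (indicator {0..} x * x powr s * exp (-(b*x))) \<partial>lborel)"
    using b by (simp add: ennreal_mult' mult.assoc)
  have bp: "b * b powr s = b powr (s+1)" using b by (simp add: powr_add)
  have pos: "b powr (s+1) > 0" using b by simp
  have "(\<integral>\<^sup>+x. ennreal (indicator {0..} x * x powr s * exp (-(b*x))) \<partial>lborel)
     = ennreal (1 / b powr (s+1)) * ennreal (Gamma (s+1))"
    unfolding eq bp using pos
    by (simp add: mult.assoc[symmetric] ennreal_mult'[symmetric] del: ennreal_mult')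
  also have "\<dots> = ennreal (Gamma (s+1) / b powr (s+1))"
    using pos by (simp add: ennreal_mult'[symmetric])
  finally show ?thesis .
qed

lemma mgf_exp:
  fixes l s a :: real
  assumes l: "l > 0" and s: "s > -1" and a: "a < l"
  shows "(\<integral>\<^sup>+x. ennreal (x powr s * exp (a*x)) \<partial>density lborel (exponential_density l))
         = ennreal (l * Gamma (s+1) / (l - a) powr (s+1))"
proof -
  have "(\<integral>\<^sup>+x. ennreal (x powr s * exp (a*x)) \<partial>density lborel (exponential_density l))
      = (\<integral>\<^sup>+x. ennreal (exponential_density l x) * ennreal (x powr s * exp (a*x)) \<partial>lborel)"
    by (rule nn_integral_density) measurable
  also have "\<dots> = (\<integral>\<^sup>+x. ennreal l * ennreal (indicator {0..} x * x powr s * exp (-((l-a)*x))) \<partial>lborel)"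
  proof (intro nn_integral_cong)
    fix x :: real
    show "ennreal (exponential_density l x) * ennreal (x powr s * exp (a*x))
        = ennreal l * ennreal (indicator {0..} x * x powr s * exp (-((l-a)*x)))"
    proof (cases "x < 0")
      case True then show ?thesis by (simp add: exponential_density_def indicator_def)
    next
      case False
      then have "exp (- x * l) * exp (a * x) = exp (-((l-a)*x))" by (simp add: exp_add[symmetric] algebra_simps)
      then show ?thesis using False l
        by (simp add: exponential_density_def indicator_def ennreal_mult'[symmetric] mult.assoc mult.left_commute)
    qed
  qed
  also have "\<dots> = ennreal l * (\<integral>\<^sup>+x. ennreal (indicator {0..} x * x powr s * exp (-((l-a)*x))) \<partial>lborel)"
    by (rule nn_integral_cmult) measurable
  also have "\<dots> = ennreal l * ennreal (Gamma (s+1) / (l-a) powr (s+1))"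
    using gamma_nn[of "l-a" s] a s by simp
  also have "\<dots> = ennreal (l * Gamma (s+1) / (l - a) powr (s+1))"
    using l by (simp add: ennreal_mult'[symmetric])
  finally show ?thesis .
qed

lemma exp_prod_prob: "l > 0 \<Longrightarrow> prob_space (exp_prod_measure l n)"
  unfolding exp_prod_measure_def by (intro prob_space_PiM prob_space_exponential_density)

lemma chernoff_prod:
  fixes l c m :: real and h :: "real \<Rightarrow> real"
  assumes l: "l > 0" and c: "c > 0" and hnn: "\<And>x. h x \<ge> 0" and hm[measurable]: "h \<in> borel_measurable borel"
    and m: "m \<ge> 0" and int: "(\<integral>\<^sup>+x. ennreal (h x) \<partial>density lborel (exponential_density l)) = ennreal m"
  shows "measure (exp_prod_measure l n) {x\<in>space (exp_prod_measure l n). c^n \<le> (\<Prod>i\<in>{1..n}. h (x i))} \<le> (m / c)^n"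
proof -
  define D where "D = density lborel (exponential_density l)"
  define P where "P = exp_prod_measure l n"
  have PD: "P = PiM {1..n} (\<lambda>_. D)" unfolding P_def D_def exp_prod_measure_def ..
  interpret D: prob_space D unfolding D_def using l by (rule prob_space_exponential_density)
  interpret PS: product_sigma_finite "\<lambda>_. D"
    unfolding product_sigma_finite_def by (simp add: D.sigma_finite_measure_axioms)
  interpret P: prob_space P using exp_prod_prob[OF l] unfolding P_def .
  have sD[measurable_cong]: "sets D = sets borel" unfolding D_def by simp
  have cn: "c^n > 0" using c by simp
  define u where "u = (\<lambda>x::nat\<Rightarrow>real. ennreal (\<Prod>i\<in>{1..n}. h (x i)))"
  have um: "u \<in> borel_measurable P" unfolding u_def PD by measurable
  have set_eq: "{x\<in>space P. c^n \<le> (\<Prod>i\<in>{1..n}. h (x i))} = {x\<in>space P. 1 \<le> ennreal (1 / c^n) * u x}"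
  proof -
    have "c^n \<le> (\<Prod>i\<in>{1..n}. h (x i)) \<longleftrightarrow> 1 \<le> ennreal (1 / c^n) * u x" for x
    proof -
      have pn: "(\<Prod>i\<in>{1..n}. h (x i)) \<ge> 0" by (intro prod_nonneg) (simp add: hnn)
      have "ennreal (1 / c^n) * u x = ennreal ((\<Prod>i\<in>{1..n}. h (x i)) / c^n)"
        unfolding u_def using cn pn by (simp add: ennreal_mult'[symmetric])
      then show ?thesis using cn by (simp add: le_divide_eq)
    qed
    then show ?thesis by auto
  qed
  have "emeasure P {x\<in>space P. 1 \<le> ennreal (1 / c^n) * u x} \<le> ennreal (1 / c^n) * (\<integral>\<^sup>+x. u x * indicator (space P) x \<partial>P)"
    by (rule nn_integral_Markov_inequality) (use um in auto)
  also have "(\<integral>\<^sup>+x. u x * indicator (space P) x \<partial>P) = (\<integral>\<^sup>+x. u x \<partial>P)"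
    by (intro nn_integral_cong) (simp add: indicator_def)
  also have "\<dots> = (\<integral>\<^sup>+x. (\<Prod>i\<in>{1..n}. ennreal (h (x i))) \<partial>P)"
    unfolding u_def by (intro nn_integral_cong) (simp add: prod_ennreal hnn)
  also have "\<dots> = (\<Prod>i\<in>{1..n}. integral\<^sup>N D (\<lambda>y. ennreal (h y)))"
    unfolding PD by (rule PS.product_nn_integral_prod) auto
  also have "\<dots> = ennreal (m ^ n)"
    using int m by (simp add: D_def prod_ennreal ennreal_power)
  finally have "emeasure P {x\<in>space P. c^n \<le> (\<Prod>i\<in>{1..n}. h (x i))} \<le> ennreal ((m/c)^n)"
    using set_eq cn m by (simp add: ennreal_mult'[symmetric] power_divide)
  then show ?thesis unfolding P_def[symmetric]
    using c m by (simp add: P.emeasure_eq_measure ennreal_le_iff2) (smt (verit) measure_nonneg zero_le_divide_iff zero_le_power)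
qed



lemma poly_geo_lim:
  fixes q k :: real assumes q: "0 < q" "q < 1"
  shows "(\<lambda>n::nat. real n powr k * q ^ n) \<longlonglongrightarrow> 0"
proof -
  define a where "a = - ln q"
  have a: "a > 0" using q by (simp add: a_def)
  have "(\<lambda>n::nat. real n powr k * exp (- a * real n)) \<longlonglongrightarrow> 0"
    using a by real_asymp
  moreover have "q ^ n = exp (- a * real n)" for n :: nat
  proof -
    have "exp (real n * ln q) = exp (ln q) ^ n" by (rule exp_of_nat_mult)
    then show ?thesis using q by (simp add: a_def mult.commute)
  qed
  ultimately show ?thesis by simp
qed



lemma small_param:
  fixes f :: "real \<Rightarrow> real"
  assumes "DERIV f 0 :> d" "d < 0" "f 0 = 1" "b > 0"
  shows "\<exists>s. 0 < s \<and> s < b \<and> f s < 1"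
proof -
  obtain e where e: "e > 0" "\<And>h. h > 0 \<Longrightarrow> h < e \<Longrightarrow> f 0 > f (0 + h)"
    using DERIV_neg_dec_right[OF assms(1,2)] by blast
  show ?thesis using e(2)[of "min (e/2) (b/2)"] e(1) assms(3,4) by (intro exI[of _ "min (e/2) (b/2)"]) auto
qed

lemma param1:
  fixes \<delta> :: real assumes "\<delta> > 0"
  shows "\<exists>s. 0 < s \<and> s < 1 \<and> Gamma (s+1) * exp (s * (euler_mascheroni - \<delta>)) < 1"
proof -
  have "DERIV (\<lambda>s::real. Gamma (s+1) * exp (s * (euler_mascheroni - \<delta>))) 0 :> - \<delta>"
    by (rule derivative_eq_intros refl | simp)+
  from small_param[OF this] show ?thesis using assms by auto
qed

lemma param2:
  fixes \<delta> :: real assumes "\<delta> > 0"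
  shows "\<exists>s. 0 < s \<and> s < 1 \<and> Gamma (-s+1) * exp (- s * (euler_mascheroni + \<delta>)) < 1"
proof -
  have "DERIV (\<lambda>s::real. Gamma (-s+1) * exp (- s * (euler_mascheroni + \<delta>))) 0 :> - \<delta>"
    by (rule derivative_eq_intros refl | simp)+
  from small_param[OF this] show ?thesis using assms by auto
qed

lemma param3:
  fixes \<delta> :: real assumes "\<delta> > 0"
  shows "\<exists>t. 0 < t \<and> t < 1 \<and> exp (- t * exp \<delta>) / (1 - t) < 1"
proof -
  have "DERIV (\<lambda>t::real. exp (- t * exp \<delta>) / (1 - t)) 0 :> 1 - exp \<delta>"
    by (rule derivative_eq_intros refl | simp)+
  from small_param[OF this] show ?thesis using assms by auto
qed

lemma param4:
  fixes \<delta> :: real assumes "\<delta> > 0"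
  shows "\<exists>t. 0 < t \<and> t < 1 \<and> exp (t * exp (-\<delta>)) / (1 + t) < 1"
proof -
  have "DERIV (\<lambda>t::real. exp (t * exp (-\<delta>)) / (1 + t)) 0 :> exp (-\<delta>) - 1"
    by (rule derivative_eq_intros refl | simp)+
  from small_param[OF this] show ?thesis using assms by auto
qed



lemma r1: assumes "l > (0::real)"
  shows "l * G / l powr (s+1) / exp (s*(- g - ln l + d)) = G * exp (s*(g - d))"
proof -
  have "l powr (s+1) = l powr s * l" using assms by (subst powr_add) simp
  then have "l powr (s+1) = l * exp (s * ln l)" using assms by (simp add: powr_def)
  moreover have "exp (s * ln l) * exp (s*(- g - ln l + d)) = exp (- (s*(g-d)))"
    by (simp add: exp_add[symmetric] algebra_simps)
  ultimately show ?thesis using assms by (simp add: field_simps exp_minus) (simp add: exp_add[symmetric])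
qed

lemma r2: assumes "l > (0::real)"
  shows "l * G / l powr (-s+1) / exp (-s*(- g - ln l - d)) = G * exp (-s*(g + d))"
proof -
  have "l powr (-s+1) = l powr (-s) * l" using assms by (subst powr_add) simp
  then have "l powr (-s+1) = l * exp (-s * ln l)" using assms by (simp add: powr_def)
  moreover have "exp (-s * ln l) * exp (-s*(- g - ln l - d)) = exp (- (-s*(g+d)))"
    by (simp add: exp_add[symmetric] algebra_simps)
  ultimately show ?thesis using assms by (simp add: field_simps exp_minus) (simp add: exp_add[symmetric])
qed

lemma r3: assumes "l > (0::real)" "t < 1"
  shows "l * Gamma (0+1) / (l - t*l) powr (0+1) / exp (t * e) = exp (- t * e) / (1 - t)"
proof -
  have "l - t*l > 0" using assms by (simp add: algebra_simps)
  then have "(l - t*l) powr (0+1) = l * (1 - t)" by (simp add: algebra_simps)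
  then show ?thesis using assms by (simp add: exp_minus field_simps)
qed

lemma r4: assumes "l > (0::real)" "t > 0"
  shows "l * Gamma (0+1) / (l - (-(t*l))) powr (0+1) / exp (- t * e) = exp (t * e) / (1 + t)"
proof -
  have "l + t*l > 0" using assms by (simp add: algebra_simps add_pos_pos)
  then have "(l - (-(t*l))) powr (0+1) = l * (1 + t)" by (simp add: algebra_simps)
  moreover have "l * (1 + t) > 0" using assms by simp
  ultimately show ?thesis using assms by (simp add: exp_minus divide_simps)
qed

lemma prod_powr_exp:
  assumes "finite I" "\<And>i. i \<in> I \<Longrightarrow> x i > (0::real)"
  shows "(\<Prod>i\<in>I. x i powr a i) = exp (\<Sum>i\<in>I. a i * ln (x i))"
proof -
  have "(\<Prod>i\<in>I. x i powr a i) = (\<Prod>i\<in>I. exp (a i * ln (x i)))"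
    using assms by (intro prod.cong refl) (force simp: powr_def)
  also have "\<dots> = exp (\<Sum>i\<in>I. a i * ln (x i))" using assms(1) by (simp add: exp_sum)
  finally show ?thesis .
qed

lemma ae_pos:
  assumes l: "l > 0"
  shows "AE x in exp_prod_measure l n. \<forall>i\<in>{1..n}. x i > 0"
proof (rule AE_finite_allI)
  fix i assume i: "i \<in> {1..n}"
  have "AE y in density lborel (exponential_density l). y > 0"
  proof (subst AE_density)
    show "AE y in lborel. 0 < ennreal (exponential_density l y) \<longrightarrow> y > 0"
      using AE_lborel_singleton[of "0::real"]
      by eventually_elim (auto simp: exponential_density_def)
  qed measurable
  then show "AE x in exp_prod_measure l n. x i > 0"
    unfolding exp_prod_measure_def
    by (rule AE_PiM_component[OF prob_space_exponential_density[OF l] i])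
qed auto




theorem theorem4p3:
  fixes k \<epsilon> :: real
  assumes "k > 0" and "\<epsilon> > 0"
  shows "\<exists>N::nat. \<forall>l::real. \<forall>\<alpha>::nat \<Rightarrow> real. \<forall>n::nat.
     l > 0 \<longrightarrow> n \<ge> 2 \<longrightarrow> n \<ge> N \<longrightarrow>
     (\<forall>i\<in>{1..n}. \<alpha> i > 0) \<longrightarrow> (\<Sum>i=1..n. \<alpha> i) = 1 \<longrightarrow>
     measure (exp_prod_measure l n)
       {x \<in> space (exp_prod_measure l n).
          (1 - (1 + \<epsilon>) * exp (- euler_mascheroni)) * Min (\<alpha> ` {1..n}) * (\<Sum>i=1..n. \<bar>x i\<bar>)
            < (\<Sum>i=1..n. \<alpha> i * x i) - (\<Prod>i=1..n. x i powr \<alpha> i)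
        \<and> (\<Sum>i=1..n. \<alpha> i * x i) - (\<Prod>i=1..n. x i powr \<alpha> i)
            < (1 - (1 - \<epsilon>) * exp (- euler_mascheroni)) * Max (\<alpha> ` {1..n}) * (\<Sum>i=1..n. \<bar>x i\<bar>)}
     \<ge> 1 - 1 / (real n powr k)"
proof -
  define g :: real where "g = exp (- euler_mascheroni)"
  have g0: "g > 0" by (simp add: g_def)
  define \<delta> where "\<delta> = ln (1 + \<epsilon>) / 3"
  have \<delta>0: "\<delta> > 0" using assms(2) by (simp add: \<delta>_def)
  have e3: "exp (3 * \<delta>) = 1 + \<epsilon>" using assms(2) by (simp add: \<delta>_def)
  have "exp (2 * \<delta>) \<le> exp (3 * \<delta>)" using \<delta>0 by simp
  then have e2: "exp (2 * \<delta>) \<le> 1 + \<epsilon>" using e3 by simp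
  obtain s1 where s1: "0 < s1" "s1 < 1" "Gamma (s1+1) * exp (s1 * (euler_mascheroni - \<delta>)) < 1"
    using param1[OF \<delta>0] by blast
  obtain s2 where s2: "0 < s2" "s2 < 1" "Gamma (-s2+1) * exp (- s2 * (euler_mascheroni + \<delta>)) < 1"
    using param2[OF \<delta>0] by blast
  obtain t3 where t3: "0 < t3" "t3 < 1" "exp (- t3 * exp \<delta>) / (1 - t3) < 1"
    using param3[OF \<delta>0] by blast
  obtain t4 where t4: "0 < t4" "t4 < 1" "exp (t4 * exp (-\<delta>)) / (1 + t4) < 1"
    using param4[OF \<delta>0] by blast
  define q1 where "q1 = Gamma (s1+1) * exp (s1 * (euler_mascheroni - \<delta>))"
  define q2 where "q2 = Gamma (-s2+1) * exp (- s2 * (euler_mascheroni + \<delta>))"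
  define q3 where "q3 = exp (- t3 * exp \<delta>) / (1 - t3)"
  define q4 where "q4 = exp (t4 * exp (-\<delta>)) / (1 + t4)"
  define q where "q = max (max q1 q2) (max q3 q4)"
  have G1: "Gamma (s1+1) > 0" using s1 by (intro Gamma_real_pos) simp
  have G2: "Gamma (-s2+1) > 0" using s2 by (intro Gamma_real_pos) simp
  have q1p: "q1 > 0" using G1 by (simp add: q1_def)
  have q2p: "q2 > 0" using G2 by (simp add: q2_def)
  have q3p: "q3 > 0" using t3 by (simp add: q3_def)
  have q4p: "q4 > 0" using t4 by (simp add: q4_def)
  have q0: "q > 0" using q1p by (simp add: q_def)
  have q1': "q < 1" unfolding q_def using s1(3) s2(3) t3(3) t4(3)
    unfolding q1_def[symmetric] q2_def[symmetric] q3_def[symmetric] q4_def[symmetric] by simp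
  have qge: "q1 \<le> q" "q2 \<le> q" "q3 \<le> q" "q4 \<le> q" by (simp_all add: q_def)
  have "eventually (\<lambda>n. real n powr k * q ^ n < 1/4) sequentially"
    by (rule order_tendstoD(2)[OF poly_geo_lim[OF q0 q1']]) simp
  then obtain N0 where N0: "\<And>n. n \<ge> N0 \<Longrightarrow> real n powr k * q ^ n < 1/4"
    unfolding eventually_sequentially by blast
  show ?thesis
  proof (intro exI[of _ N0] allI impI)
    fix l :: real and \<alpha> :: "nat \<Rightarrow> real" and n :: nat
    assume l: "l > 0" and n2: "n \<ge> 2" and nN: "n \<ge> N0" and apos: "\<forall>i\<in>{1..n}. \<alpha> i > 0"
      and asum: "(\<Sum>i=1..n. \<alpha> i) = 1"
    define P where "P = exp_prod_measure l n"
    interpret P: prob_space P unfolding P_def by (rule exp_prod_prob[OF l])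
    have sP[measurable_cong]: "sets P = sets (PiM {1..n} (\<lambda>_. borel :: real measure))"
      unfolding P_def exp_prod_measure_def by (intro sets_PiM_cong) auto
    define T where "T = {x \<in> space P.
          (1 - (1 + \<epsilon>) * exp (- euler_mascheroni)) * Min (\<alpha> ` {1..n}) * (\<Sum>i=1..n. \<bar>x i\<bar>)
            < (\<Sum>i=1..n. \<alpha> i * x i) - (\<Prod>i=1..n. x i powr \<alpha> i)
        \<and> (\<Sum>i=1..n. \<alpha> i * x i) - (\<Prod>i=1..n. x i powr \<alpha> i)
            < (1 - (1 - \<epsilon>) * exp (- euler_mascheroni)) * Max (\<alpha> ` {1..n}) * (\<Sum>i=1..n. \<bar>x i\<bar>)}"
    have Tm: "T \<in> sets P" unfolding T_def by measurable
    define \<mu> where "\<mu> = - euler_mascheroni - ln l"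
    define B1 where "B1 = {x\<in>space P. (exp (s1*(\<mu>+\<delta>)))^n \<le> (\<Prod>i\<in>{1..n}. x i powr s1)}"
    define B2 where "B2 = {x\<in>space P. (exp (-s2*(\<mu>-\<delta>)))^n \<le> (\<Prod>i\<in>{1..n}. x i powr (-s2))}"
    define B3 where "B3 = {x\<in>space P. (exp (t3 * exp \<delta>))^n \<le> (\<Prod>i\<in>{1..n}. x i powr 0 * exp ((t3*l) * x i))}"
    define B4 where "B4 = {x\<in>space P. (exp (- t4 * exp (-\<delta>)))^n \<le> (\<Prod>i\<in>{1..n}. x i powr 0 * exp ((-(t4*l)) * x i))}"
    have Bm: "B1 \<in> sets P" "B2 \<in> sets P" "B3 \<in> sets P" "B4 \<in> sets P"
      unfolding B1_def B2_def B3_def B4_def by measurable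
    have PD: "P = PiM {1..n} (\<lambda>_. density lborel (exponential_density l))"
      unfolding P_def exp_prod_measure_def ..
    have pB1: "measure P B1 \<le> q1 ^ n"
    proof -
      have "measure P B1 \<le> ((l * Gamma (s1+1) / l powr (s1+1)) / exp (s1*(\<mu>+\<delta>)))^n"
        unfolding B1_def P_def
      proof (rule chernoff_prod[OF l])
        show "(\<integral>\<^sup>+x. ennreal (x powr s1) \<partial>density lborel (exponential_density l)) = ennreal (l * Gamma (s1+1) / l powr (s1+1))"
          using mgf_exp[OF l, of s1 0] s1 l by simp
      qed (use l G1 in auto)
      also have "(l * Gamma (s1+1) / l powr (s1+1)) / exp (s1*(\<mu>+\<delta>)) = q1"
        unfolding \<mu>_def q1_def using r1[OF l, of "Gamma (s1+1)" s1 euler_mascheroni \<delta>] by simp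
      finally show ?thesis .
    qed
    have pB2: "measure P B2 \<le> q2 ^ n"
    proof -
      have "measure P B2 \<le> ((l * Gamma (-s2+1) / l powr (-s2+1)) / exp (-s2*(\<mu>-\<delta>)))^n"
        unfolding B2_def P_def
      proof (rule chernoff_prod[OF l])
        show "(\<integral>\<^sup>+x. ennreal (x powr (-s2)) \<partial>density lborel (exponential_density l)) = ennreal (l * Gamma (-s2+1) / l powr (-s2+1))"
          using mgf_exp[OF l, of "-s2" 0] s2 l by simp
      qed (use l G2 in auto)
      also have "(l * Gamma (-s2+1) / l powr (-s2+1)) / exp (-s2*(\<mu>-\<delta>)) = q2"
        unfolding \<mu>_def q2_def using r2[OF l, of "Gamma (-s2+1)" s2 euler_mascheroni \<delta>] by simp
      finally show ?thesis .
    qed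
    have pB3: "measure P B3 \<le> q3 ^ n"
    proof -
      have "measure P B3 \<le> ((l * Gamma (0+1) / (l - t3*l) powr (0+1)) / exp (t3 * exp \<delta>))^n"
        unfolding B3_def P_def
      proof (rule chernoff_prod[OF l])
        show "(\<integral>\<^sup>+x. ennreal (x powr 0 * exp ((t3*l) * x)) \<partial>density lborel (exponential_density l)) = ennreal (l * Gamma (0+1) / (l - t3*l) powr (0+1))"
          using mgf_exp[OF l, of 0 "t3*l"] t3 l by (simp add: mult_less_cancel_right1)
        show "0 \<le> l * Gamma (0+1) / (l - t3*l) powr (0+1)" using l t3 by simp
      qed (use l in auto)
      also have "(l * Gamma (0+1) / (l - t3*l) powr (0+1)) / exp (t3 * exp \<delta>) = q3"
        unfolding q3_def using r3[OF l t3(2)] by simp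
      finally show ?thesis .
    qed
    have pB4: "measure P B4 \<le> q4 ^ n"
    proof -
      have "measure P B4 \<le> ((l * Gamma (0+1) / (l - (-(t4*l))) powr (0+1)) / exp (- t4 * exp (-\<delta>)))^n"
        unfolding B4_def P_def
      proof (rule chernoff_prod[OF l])
        show "(\<integral>\<^sup>+x. ennreal (x powr 0 * exp ((-(t4*l)) * x)) \<partial>density lborel (exponential_density l)) = ennreal (l * Gamma (0+1) / (l - (-(t4*l))) powr (0+1))"
          using mgf_exp[OF l, of 0 "-(t4*l)"] t4 l mult_pos_pos[OF t4(1) l] by simp
        show "0 \<le> l * Gamma (0+1) / (l - (-(t4*l))) powr (0+1)" using l t4 by simp
      qed (use l in auto)
      also have "(l * Gamma (0+1) / (l - (-(t4*l))) powr (0+1)) / exp (- t4 * exp (-\<delta>)) = q4"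
        unfolding q4_def using r4[OF l t4(1)] by simp
      finally show ?thesis .
    qed
    have npos: "real n > 0" using n2 by simp
    have fin1: "finite {1..n}" by simp
    have key: "x \<in> T" if x: "x \<in> space P" and xp: "\<forall>i\<in>{1..n}. x i > 0"
      and nb: "x \<notin> B1" "x \<notin> B2" "x \<notin> B3" "x \<notin> B4" for x
    proof -
      define L where "L = (\<Sum>i=1..n. ln (x i))"
      define S where "S = (\<Sum>i=1..n. x i)"
      have xp': "\<And>i. i \<in> {1..n} \<Longrightarrow> x i > 0" using xp by blast
      have pw: "(\<Prod>i\<in>{1..n}. x i powr a) = exp (a * L)" for a
        using prod_powr_exp[OF fin1 xp', where a="\<lambda>_. a"] by (simp add: L_def sum_distrib_left)
      have pe: "(\<Prod>i\<in>{1..n}. x i powr 0 * exp (b * x i)) = exp (b * S)" for b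
      proof -
        have "(\<Prod>i\<in>{1..n}. x i powr 0 * exp (b * x i)) = (\<Prod>i\<in>{1..n}. exp (b * x i))"
          using xp' by (intro prod.cong refl) (simp add: less_imp_neq[symmetric])
        also have "\<dots> = exp (b * S)" by (simp add: exp_sum S_def sum_distrib_left)
        finally show ?thesis .
      qed
      have en: "(exp a)^n = exp (real n * a)" for a by (simp add: exp_of_nat_mult)
      have h1: "L < n * (\<mu>+\<delta>)"
      proof -
        have "\<not> ((exp (s1*(\<mu>+\<delta>)))^n \<le> (\<Prod>i\<in>{1..n}. x i powr s1))" using nb(1) x unfolding B1_def by blast
        then have "exp (s1 * L) < exp (real n * (s1*(\<mu>+\<delta>)))" unfolding pw en by simp
        then have "s1 * L < s1 * (n * (\<mu>+\<delta>))" by (simp add: algebra_simps)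
        then show ?thesis using s1(1) by simp
      qed
      have h2: "L > n * (\<mu>-\<delta>)"
      proof -
        have "\<not> ((exp (-s2*(\<mu>-\<delta>)))^n \<le> (\<Prod>i\<in>{1..n}. x i powr (-s2)))" using nb(2) x unfolding B2_def by blast
        then have "exp (-s2 * L) < exp (real n * (-s2*(\<mu>-\<delta>)))" unfolding pw en by simp
        then have "s2 * (n * (\<mu>-\<delta>)) < s2 * L" by (simp add: algebra_simps)
        then show ?thesis using s2(1) by simp
      qed
      have h3: "S * l < n * exp \<delta>"
      proof -
        have "\<not> ((exp (t3 * exp \<delta>))^n \<le> (\<Prod>i\<in>{1..n}. x i powr 0 * exp ((t3*l) * x i)))" using nb(3) x unfolding B3_def by blast
        then have "exp ((t3*l) * S) < exp (real n * (t3 * exp \<delta>))" unfolding pe en by simp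
        then have "t3 * (S * l) < t3 * (n * exp \<delta>)" by (simp add: algebra_simps)
        then show ?thesis using t3(1) by simp
      qed
      have h4: "S * l > n * exp (-\<delta>)"
      proof -
        have "\<not> ((exp (- t4 * exp (-\<delta>)))^n \<le> (\<Prod>i\<in>{1..n}. x i powr 0 * exp ((-(t4*l)) * x i)))" using nb(4) x unfolding B4_def by blast
        then have "exp ((-(t4*l)) * S) < exp (real n * (- t4 * exp (-\<delta>)))" unfolding pe en by simp
        then have "t4 * (n * exp (-\<delta>)) < t4 * (S * l)" by (simp add: algebra_simps)
        then show ?thesis using t4(1) by simp
      qed
      define GM where "GM = exp (L / n)"
      define E where "E = exp \<delta>"
      have E1: "E > 1" using \<delta>0 by (simp add: E_def)
      have "E * E = exp (\<delta> + \<delta>)" by (simp only: E_def exp_add)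
      also have "\<delta> + \<delta> = 2 * \<delta>" by simp
      finally have E2: "E * E \<le> 1 + \<epsilon>" using e2 by simp
      have GMu: "GM < g * E / l"
      proof -
        have "L / n < \<mu> + \<delta>" using h1 npos by (simp add: divide_less_eq mult.commute)
        then have "GM < exp (\<mu> + \<delta>)" by (simp add: GM_def)
        also have "exp (\<mu> + \<delta>) = g * E / l"
        proof -
          have "\<mu> + \<delta> = (- euler_mascheroni + \<delta>) - ln l" by (simp add: \<mu>_def)
          then show ?thesis by (simp only: exp_diff exp_add exp_ln[OF l] g_def E_def)
        qed
        finally show ?thesis .
      qed
      have GMl: "GM > g / (E * l)"
      proof -
        have "L / n > \<mu> - \<delta>" using h2 npos by (simp add: less_divide_eq mult.commute)
        then have "GM > exp (\<mu> - \<delta>)" by (simp add: GM_def)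
        moreover have "exp (\<mu> - \<delta>) = g / (E * l)"
        proof -
          have "\<mu> - \<delta> = (- euler_mascheroni) - (\<delta> + ln l)" by (simp add: \<mu>_def)
          then show ?thesis by (simp only: exp_diff exp_add exp_ln[OF l] g_def E_def)
        qed
        ultimately show ?thesis by simp
      qed
      have "exp (-\<delta>) = 1 / E" by (simp add: E_def exp_minus divide_inverse)
      then have h4': "S * l > n / E" using h4 by simp
      have Sl: "S / n > 1 / (E * l)"
      proof -
        have "S * l * E > n" using h4' E1 by (simp add: divide_less_eq)
        then show ?thesis using npos l E1 by (simp add: field_simps)
      qed
      have Su: "S / n < E / l"
        using h3 npos l unfolding E_def[symmetric] by (simp add: field_simps)
      have lo: "GM < (1 + \<epsilon>) * g * (S / n)"
      proof -
        have "g * E / l = g * (E * E) * (1 / (E * l))" using E1 l by (simp add: field_simps)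
        also have "\<dots> \<le> g * (1 + \<epsilon>) * (1 / (E * l))"
          using E2 g0 E1 l by (intro mult_right_mono mult_left_mono) auto
        also have "\<dots> < g * (1 + \<epsilon>) * (S / n)"
          using Sl g0 assms(2) by (intro mult_strict_left_mono) auto
        finally show ?thesis using GMu by (simp add: mult_ac)
      qed
      have hi: "(1 - \<epsilon>) * g * (S / n) < GM"
      proof (cases "\<epsilon> < 1")
        case False
        have "S / n > 0" using Sl E1 l by (smt (verit) divide_pos_pos mult_pos_pos)
        then have "(1 - \<epsilon>) * g * (S / n) \<le> 0" using False g0
          by (intro mult_nonpos_nonneg) (auto intro: mult_nonpos_nonneg)
        moreover have "GM > 0" by (simp add: GM_def)
        ultimately show ?thesis by linarith
      next
        case True
        have "(1 - \<epsilon>) * g * (S / n) < (1 - \<epsilon>) * g * (E / l)"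
          using Su True g0 by (intro mult_strict_left_mono) auto
        also have "\<dots> = g * ((1 - \<epsilon>) * (E * E)) * (1 / (E * l))" using E1 l by (simp add: field_simps)
        also have "\<dots> \<le> g * 1 * (1 / (E * l))"
        proof -
          have "(1 - \<epsilon>) * (E * E) \<le> (1 - \<epsilon>) * (1 + \<epsilon>)" using True E2 by (intro mult_left_mono) auto
          also have "\<dots> \<le> 1" by (simp add: algebra_simps)
          finally show ?thesis using g0 E1 l by (intro mult_right_mono mult_left_mono) auto
        qed
        finally show ?thesis using GMl by simp
      qed
      have fu: "fw {1..n} x (\<lambda>_. 1 / real n) = S / n - GM"
        using fw_unif[OF fin1, of n x] npos by (simp add: S_def L_def GM_def)
      have cn: "card {1..n} = n" by simp
      have D: "(1 - (1 + \<epsilon>) * g) * Min (\<alpha> ` {1..n}) * (\<Sum>i\<in>{1..n}. x i) < fw {1..n} x \<alpha> \<and>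
               fw {1..n} x \<alpha> < (1 - (1 - \<epsilon>) * g) * Max (\<alpha> ` {1..n}) * (\<Sum>i\<in>{1..n}. x i)"
      proof (rule det_main[OF fin1 cn _ xp'])
        show "0 < n" using n2 by simp
        show "\<And>i. i \<in> {1..n} \<Longrightarrow> 0 < \<alpha> i" using apos by blast
        show "(\<Sum>i\<in>{1..n}. \<alpha> i) = 1" using asum by simp
        show "(1 - (1 + \<epsilon>) * g) * (\<Sum>i\<in>{1..n}. x i) / real n < fw {1..n} x (\<lambda>_. 1 / real n)"
        proof -
          have eq: "(1 - (1 + \<epsilon>) * g) * S / real n = S / n - (1 + \<epsilon>) * g * (S / n)" using npos by (simp add: field_simps)
          show ?thesis unfolding fu S_def[symmetric] eq using lo by (rule diff_strict_left_mono)
        qed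
        show "fw {1..n} x (\<lambda>_. 1 / real n) < (1 - (1 - \<epsilon>) * g) * (\<Sum>i\<in>{1..n}. x i) / real n"
        proof -
          have eq: "(1 - (1 - \<epsilon>) * g) * S / real n = S / n - (1 - \<epsilon>) * g * (S / n)" using npos by (simp add: field_simps)
          show ?thesis unfolding fu S_def[symmetric] eq using hi by (rule diff_strict_left_mono)
        qed
      qed
      have fa: "fw {1..n} x \<alpha> = (\<Sum>i=1..n. \<alpha> i * x i) - (\<Prod>i=1..n. x i powr \<alpha> i)"
        unfolding fw_def using prod_powr_exp[OF fin1 xp', where a=\<alpha>] by simp
      have sa: "(\<Sum>i=1..n. \<bar>x i\<bar>) = (\<Sum>i=1..n. x i)"
        by (intro sum.cong refl) (meson abs_of_pos xp')
      show ?thesis unfolding T_def mem_Collect_eq sa fa[symmetric] g_def[symmetric] using D x by blast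
    qed
    have ae: "AE x in P. x \<in> space P - (B1 \<union> B2 \<union> B3 \<union> B4) \<longrightarrow> x \<in> T"
      using ae_pos[OF l, of n] unfolding P_def[symmetric] by eventually_elim (use key in blast)
    have m1: "measure P (space P - (B1 \<union> B2 \<union> B3 \<union> B4)) \<le> measure P T"
      by (rule P.finite_measure_mono_AE[OF ae Tm])
    have m2: "measure P (space P - (B1 \<union> B2 \<union> B3 \<union> B4)) = 1 - measure P (B1 \<union> B2 \<union> B3 \<union> B4)"
      by (rule P.prob_compl) (use Bm in auto)
    have m3: "measure P (B1 \<union> B2 \<union> B3 \<union> B4) \<le> measure P B1 + measure P B2 + measure P B3 + measure P B4"
    proof -
      have "measure P (B1 \<union> B2 \<union> B3 \<union> B4) \<le> measure P (B1 \<union> B2 \<union> B3) + measure P B4"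
        by (rule measure_subadditive) (use Bm in \<open>auto simp: P.emeasure_finite\<close>)
      also have "measure P (B1 \<union> B2 \<union> B3) \<le> measure P (B1 \<union> B2) + measure P B3"
        by (rule measure_subadditive) (use Bm in \<open>auto simp: P.emeasure_finite\<close>)
      also have "measure P (B1 \<union> B2) \<le> measure P B1 + measure P B2"
        by (rule measure_subadditive) (use Bm in \<open>auto simp: P.emeasure_finite\<close>)
      finally show ?thesis by simp
    qed
    have qn: "q1^n \<le> q^n" "q2^n \<le> q^n" "q3^n \<le> q^n" "q4^n \<le> q^n"
      using qge q1p q2p q3p q4p by (auto intro: power_mono)
    have m4: "4 * q^n \<le> 1 / (real n powr k)"
    proof -
      have "real n powr k * q ^ n < 1/4" using N0[OF nN] .
      moreover have "real n powr k > 0" using npos by simp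
      ultimately show ?thesis by (simp add: field_simps)
    qed
    have fin: "1 - 1 / (real n powr k) \<le> measure P T"
      using m1 m2 m3 m4 pB1 pB2 pB3 pB4 qn by linarith
    then show "measure (exp_prod_measure l n)
       {x \<in> space (exp_prod_measure l n).
          (1 - (1 + \<epsilon>) * exp (- euler_mascheroni)) * Min (\<alpha> ` {1..n}) * (\<Sum>i=1..n. \<bar>x i\<bar>)
            < (\<Sum>i=1..n. \<alpha> i * x i) - (\<Prod>i=1..n. x i powr \<alpha> i)
        \<and> (\<Sum>i=1..n. \<alpha> i * x i) - (\<Prod>i=1..n. x i powr \<alpha> i)
            < (1 - (1 - \<epsilon>) * exp (- euler_mascheroni)) * Max (\<alpha> ` {1..n}) * (\<Sum>i=1..n. \<bar>x i\<bar>)}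
     \<ge> 1 - 1 / (real n powr k)" unfolding T_def P_def .
  qed
qed

end
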